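(* Let $q\ge5$ be a prime power with $q\equiv\xi\pmod 3$, $\xi\in\{-1,0,1\}$, and let $\mathcal{C}_\mathscr{C}$ be the $[q+1,q-3,5]_q$ code with parity check matrix whose columns are the vectors $(1,t,t^2,t^3)$, $t\in\mathbb{F}_q$, and $(0,0,0,1)$. Let $w\in\{3,\ldots,\lfloor (q+3)/2\rfloor\}$. (i) If $(W,\xi)\in\{(2,1),(3,1),(3,0)\}$ and $\mathcal{V}^{(W)}_a,\mathcal{V}^{(W)}_b$ are weight-$W$ cosets of $\mathcal{C}_\mathscr{C}$ representing the two distinct weight distributions of weight-$W$ cosets, then $$B_{q+4-w}(\mathcal{V}^{(W)}_a)-(-1)^qB_w(\mathcal{V}^{(W)}_a)=B_{q+4-w}(\mathcal{V}^{(W)}_b)-(-1)^qB_w(\mathcal{V}^{(W)}_b).$$ (ii) If $\xi=-1$ and $\mathcal{V}^{(3)}_a,\mathcal{V}^{(3)}_b,\mathcal{V}^{(3)}_c$ are weight-$3$ cosets of $\mathcal{C}_\mathscr{C}$ representing the three distinct weight distributions of weight-$3$ cosets, then $$B_{q+4-w}(\mathcal{V}^{(3)}_a)-(-1)^qB_w(\mathcal{V}^{(3)}_a)=B_{q+4-w}(\mathcal{V}^{(3)}_b)-(-1)^qB_w(\mathcal{V}^{(3)}_b)=B_{q+4-w}(\mathcal{V}^{(3)}_c)-(-1)^qB_w(\mathcal{V}^{(3)}_c).$$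
   Context: A coset of a linear code $\mathcal{C}\subseteq\mathbb{F}_q^n$ is a set $\mathbf{v}+\mathcal{C}$; its weight is the minimum Hamming weight of its vectors. $B_w(\mathcal{V})$ is the number of vectors of Hamming weight $w$ in the coset $\mathcal{V}$. For $(W,\xi)\in\{(2,1),(3,1),(3,0)\}$ the weight-$W$ cosets of $\mathcal{C}_\mathscr{C}$ have exactly two distinct weight distributions, and for $\xi=-1$ the weight-$3$ cosets have exactly three distinct weight distributions. *)

theory Defs
  imports Main
begin

text \<open>Coordinates of F_q^(q+1) are indexed by 'a option: Some t for t in F_q,
  None for the extra column (0,0,0,1).  Vectors are functions 'a option => 'a.\<close>

definition pcm_col :: "'a::field option \<Rightarrow> nat \<Rightarrow> 'a" where
  "pcm_col p k = (case p of Some t \<Rightarrow> t ^ k | None \<Rightarrow> (if k = 3 then 1 else 0))"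

definition cubic_code :: "('a::{field,finite} option \<Rightarrow> 'a) set" where
  "cubic_code = {c. \<forall>k<4. (\<Sum>p\<in>UNIV. c p * pcm_col p k) = 0}"

definition hweight :: "('i::finite \<Rightarrow> 'a::zero) \<Rightarrow> nat" where
  "hweight x = card {i. x i \<noteq> 0}"

definition coset :: "('a::{field,finite} option \<Rightarrow> 'a) \<Rightarrow> ('a option \<Rightarrow> 'a) set" where
  "coset v = {(\<lambda>p. v p + c p) | c. c \<in> cubic_code}"

definition coset_weight :: "('a::{zero,finite} option \<Rightarrow> 'a) set \<Rightarrow> nat" where
  "coset_weight V = Min (hweight ` V)"

definition B :: "nat \<Rightarrow> ('a::{zero,finite} option \<Rightarrow> 'a) set \<Rightarrow> nat" where
  "B w V = card {x \<in> V. hweight x = w}"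

end

theory Submission
  imports Defs "HOL-Computational_Algebra.Polynomial"
begin

definition gco :: "nat \<Rightarrow> nat \<Rightarrow> nat \<Rightarrow> nat" where
  "gco n k t = (if k \<le> t then (n - k) choose (t - k) else 0)"

lemma alt_binom:
  assumes "1 \<le> K" "K \<le> m"
  shows "(\<Sum>i\<le>K. (-1)^i * int ((m choose i) * ((m - i) choose (K - i)))) = 0"
proof -
  have "(\<Sum>i\<le>K. (-1)^i * int ((m choose i) * ((m - i) choose (K - i))))
      = (\<Sum>i\<le>K. int (m choose K) * ((-1)^i * int (K choose i)))"
  proof (rule sum.cong)
    fix i assume "i \<in> {..K}"
    then have "(m choose K) * (K choose i) = (m choose i) * ((m - i) choose (K - i))"
      using choose_mult[of i K m] assms by simp
    then show "(-1)^i * int ((m choose i) * ((m - i) choose (K - i))) = int (m choose K) * ((-1)^i * int (K choose i))"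
      by (metis mult.left_commute of_nat_mult)
  qed simp
  also have "\<dots> = int (m choose K) * (\<Sum>i\<le>K. (-1)^i * int (K choose i))"
    by (simp add: sum_distrib_left)
  also have "(\<Sum>i\<le>K. (-1)^i * int (K choose i)) = 0"
    using choose_alternating_sum[of K] assms by simp
  finally show ?thesis by simp
qed

lemma triangular_shifted:
  fixes E :: "nat \<Rightarrow> int"
  assumes eq: "\<And>s. 1 \<le> s \<Longrightarrow> s \<le> m \<Longrightarrow> (\<Sum>i\<le>s. E i * int ((m - i) choose (s - i))) = 0"
  shows "s \<le> m \<Longrightarrow> E s = (-1)^s * int (m choose s) * E 0"
proof (induction s rule: less_induct)
  case (less s)
  show ?case
  proof (cases "s = 0")
    case True then show ?thesis by simp
  next
    case False
    then have s1: "1 \<le> s" by simp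
    have "0 = (\<Sum>i\<le>s. E i * int ((m - i) choose (s - i)))" using eq[OF s1 less.prems] by simp
    also have "\<dots> = (\<Sum>i<s. E i * int ((m - i) choose (s - i))) + E s"
      by (simp add: lessThan_Suc_atMost[symmetric])
    also have "(\<Sum>i<s. E i * int ((m - i) choose (s - i)))
         = (\<Sum>i<s. (-1)^i * int ((m choose i) * ((m - i) choose (s - i)))) * E 0"
      unfolding sum_distrib_right
    proof (rule sum.cong)
      fix i assume "i \<in> {..<s}"
      then have i: "i < s" "i \<le> m" using less.prems by auto
      have "E i = (-1)^i * int (m choose i) * E 0" using less.IH[OF i] .
      then show "E i * int ((m - i) choose (s - i)) = (-1)^i * int ((m choose i) * ((m - i) choose (s - i))) * E 0"
        by (simp add: algebra_simps)
    qed simp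
    also have "(\<Sum>i<s. (-1)^i * int ((m choose i) * ((m - i) choose (s - i))))
        = - ((-1)^s * int (m choose s))"
    proof -
      have "(\<Sum>i\<le>s. (-1)^i * int ((m choose i) * ((m - i) choose (s - i)))) = 0"
        using alt_binom[OF s1 less.prems] .
      then show ?thesis by (simp add: lessThan_Suc_atMost[symmetric])
    qed
    finally show ?thesis by (simp add: algebra_simps)
  qed
qed

lemma triangular:
  fixes D :: "nat \<Rightarrow> int"
  assumes D0: "D 0 = 0" "D 1 = 0" "D 2 = 0" and n3: "3 \<le> n"
    and eq: "\<And>t. 4 \<le> t \<Longrightarrow> t \<le> n \<Longrightarrow> (\<Sum>k\<le>n. D k * int (gco n k t)) = 0"
    and k: "3 \<le> k" "k \<le> n"
  shows "D k = (-1)^(k-3) * int ((n-3) choose (k-3)) * D 3"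
proof -
  define m where "m = n - 3"
  have shift: "(\<Sum>k\<le>n. D k * int (gco n k t)) = (\<Sum>i\<le>m. D (i+3) * int (gco n (i+3) t))" for t
  proof -
    have "{..n} = {..<3} \<union> {3..n}" using n3 by auto
    then have "(\<Sum>k\<le>n. D k * int (gco n k t)) = (\<Sum>k<3. D k * int (gco n k t)) + (\<Sum>k\<in>{3..n}. D k * int (gco n k t))"
      by (simp add: sum.union_disjoint[symmetric] ivl_disj_int)
    also have "(\<Sum>k<3. D k * int (gco n k t)) = 0" using D0 by (simp add: numeral_3_eq_3 numeral_2_eq_2)
    also have "(\<Sum>k\<in>{3..n}. D k * int (gco n k t)) = (\<Sum>i\<in>{0..m}. D (i+3) * int (gco n (i+3) t))"
      using sum.shift_bounds_cl_nat_ivl[of "\<lambda>k. D k * int (gco n k t)" 0 3 m] n3 by (simp add: m_def)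
    finally show ?thesis by (simp add: atLeast0AtMost)
  qed
  have e: "n - (i + 3) = m - i" for i by (simp add: m_def)
  have eqE: "(\<Sum>i\<le>s. D (i+3) * int ((m - i) choose (s - i))) = 0" if "1 \<le> s" "s \<le> m" for s
  proof -
    have "(\<Sum>i\<le>m. D (i+3) * int (gco n (i+3) (s+3))) = (\<Sum>i\<le>m. if i \<le> s then D (i+3) * int ((m - i) choose (s - i)) else 0)"
      using e by (intro sum.cong) (auto simp: gco_def)
    also have "\<dots> = (\<Sum>i\<in>{..m} \<inter> {i. i \<le> s}. D (i+3) * int ((m - i) choose (s - i)))"
      by (simp add: sum.If_cases)
    also have "{..m} \<inter> {i. i \<le> s} = {..s}" using that by auto
    finally have "(\<Sum>i\<le>m. D (i+3) * int (gco n (i+3) (s+3))) = (\<Sum>i\<le>s. D (i+3) * int ((m - i) choose (s - i)))" .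
    moreover have "(\<Sum>i\<le>m. D (i+3) * int (gco n (i+3) (s+3))) = 0"
      using eq[of "s+3"] shift[of "s+3"] that by (simp add: m_def)
    ultimately show ?thesis by simp
  qed
  have kk: "k - 3 \<le> m" using k by (simp add: m_def)
  define E where "E = (\<lambda>i. D (i+3))"
  have eqE': "(\<Sum>i\<le>s. E i * int ((m - i) choose (s - i))) = 0" if "1 \<le> s" "s \<le> m" for s
    unfolding E_def using eqE[OF that] .
  have "E (k-3) = (-1)^(k-3) * int (m choose (k-3)) * E 0"
    using triangular_shifted[of m E "k-3"] eqE' kk by blast
  then have "D ((k-3)+3) = (-1)^(k-3) * int (m choose (k-3)) * D (0+3)"
    unfolding E_def .
  moreover have "k - 3 + 3 = k" using k by simp
  ultimately have "D k = (-1)^(k-3) * int (m choose (k-3)) * D 3" by simp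
  then show ?thesis unfolding m_def .
qed

definition syn :: "('a::field option \<Rightarrow> 'a) \<Rightarrow> nat \<Rightarrow> 'a" where
  "syn x k = (\<Sum>p\<in>UNIV. x p * pcm_col p k)"

definition pv :: "'a::field poly \<Rightarrow> 'a option \<Rightarrow> 'a" where
  "pv P p = (case p of Some t \<Rightarrow> poly P t | None \<Rightarrow> coeff P 3)"

lemma pv_expand:
  assumes "degree P \<le> 3"
  shows "pv P p = (\<Sum>k<4. coeff P k * pcm_col p k)"
proof (cases p)
  case None
  have "(\<Sum>k<4. coeff P k * pcm_col p k) = (\<Sum>k<4. if k = 3 then coeff P k else 0)"
    by (rule sum.cong) (auto simp: pcm_col_def None)
  also have "\<dots> = coeff P 3" by (simp add: sum.delta)
  finally show ?thesis by (simp add: pv_def None)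
next
  case (Some t)
  have "poly P t = (\<Sum>i\<le>degree P. coeff P i * t ^ i)" by (rule poly_altdef)
  also have "\<dots> = (\<Sum>i<4. coeff P i * t ^ i)"
    by (rule sum.mono_neutral_left) (use assms in \<open>auto simp: coeff_eq_0\<close>)
  finally show ?thesis by (simp add: pv_def pcm_col_def Some)
qed

lemma code_orth:
  fixes c :: "'a::{field,finite} option \<Rightarrow> 'a"
  assumes "c \<in> cubic_code" "degree P \<le> 3"
  shows "(\<Sum>p\<in>UNIV. c p * pv P p) = 0"
proof -
  have "(\<Sum>p\<in>UNIV. c p * pv P p) = (\<Sum>p\<in>UNIV. \<Sum>k<4. coeff P k * (c p * pcm_col p k))"
    by (simp add: pv_expand[OF assms(2)] sum_distrib_left algebra_simps)
  also have "\<dots> = (\<Sum>k<4. coeff P k * (\<Sum>p\<in>UNIV. c p * pcm_col p k))"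
    by (simp add: sum.swap[of _ UNIV] sum_distrib_left)
  also have "\<dots> = 0" using assms(1) by (simp add: cubic_code_def)
  finally show ?thesis .
qed

lemma sum_single_nz:
  fixes f :: "'b::finite \<Rightarrow> 'c::comm_monoid_add"
  assumes "\<And>p. p \<noteq> p0 \<Longrightarrow> f p = 0"
  shows "(\<Sum>p\<in>UNIV. f p) = f p0"
proof -
  have "(\<Sum>p\<in>UNIV. f p) = f p0 + (\<Sum>p\<in>UNIV - {p0}. f p)"
    by (simp add: sum.remove)
  also have "(\<Sum>p\<in>UNIV - {p0}. f p) = 0" using assms by (intro sum.neutral) auto
  finally show ?thesis by simp
qed

definition supp :: "('b \<Rightarrow> 'c::zero) \<Rightarrow> 'b set" where "supp x = {i. x i \<noteq> 0}"

lemma indep: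
  fixes c :: "'a::{field,finite} option \<Rightarrow> 'a"
  assumes cc: "c \<in> cubic_code" and cs: "card (supp c) \<le> 4"
  shows "c p0 = 0"
proof (rule ccontr)
  assume nz: "c p0 \<noteq> 0"
  define S where "S = supp c"
  have p0S: "p0 \<in> S" using nz by (simp add: S_def supp_def)
  define F where "F = {t. Some t \<in> S \<and> Some t \<noteq> p0}"
  have SF: "Some ` F \<subseteq> S - {p0}" by (auto simp: F_def)
  have cardF: "card F = card (Some ` F)" by (simp add: card_image)
  have cSp: "card (S - {p0}) \<le> 3" using cs p0S by (simp add: S_def)
  have cF3: "card F \<le> 3" using card_mono[OF _ SF] cSp cardF by simp
  define Q where "Q = (\<Prod>t\<in>F. [:-t, 1:])"
  have Qnz: "Q \<noteq> 0" by (simp add: Q_def)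
  have degQ: "degree Q = card F"
    unfolding Q_def by (subst degree_prod_eq_sum_degree) auto
  have lcQ: "lead_coeff Q = 1" by (simp add: Q_def lead_coeff_prod)
  have polyQ: "poly Q t = (\<Prod>s\<in>F. t - s)" for t by (simp add: Q_def poly_prod)
  have polyQ0: "t \<in> F \<Longrightarrow> poly Q t = 0" for t by (simp add: polyQ)
  show False
  proof (cases p0)
    case None
    define P where "P = Q * [:0, 1:] ^ (3 - card F)"
    have degP: "degree P = 3" using cF3
      by (simp add: P_def degree_mult_eq Qnz degree_linear_power degQ)
    have "coeff P 3 = lead_coeff P" using degP by simp
    also have "\<dots> = 1" by (simp add: P_def lead_coeff_mult lcQ lead_coeff_power)
    finally have cP3: "coeff P 3 = 1" .
    have "(\<Sum>p\<in>UNIV. c p * pv P p) = c p0 * pv P p0"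
    proof (rule sum_single_nz)
      fix p assume "p \<noteq> p0"
      show "c p * pv P p = 0"
      proof (cases "c p = 0")
        case False
        then obtain t where "p = Some t" "t \<in> F" using \<open>p \<noteq> p0\<close> None
          by (cases p) (auto simp: F_def S_def supp_def)
        then show ?thesis by (simp add: pv_def P_def polyQ0)
      qed simp
    qed
    then have "c p0 * pv P p0 = 0" using code_orth[OF cc] degP by simp
    then show False using nz cP3 None by (simp add: pv_def)
  next
    case (Some t0)
    have t0F: "t0 \<notin> F" by (simp add: F_def Some)
    have "(\<Sum>p\<in>UNIV. c p * pv Q p) = c p0 * pv Q p0"
    proof (rule sum_single_nz)
      fix p assume "p \<noteq> p0"
      show "c p * pv Q p = 0"
      proof (cases "c p = 0")
        case False
        show ?thesis
        proof (cases p)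
          case None
          have "Some ` F \<subseteq> S - {p0, None}" using SF by auto
          moreover have "card (S - {p0, None}) \<le> 2"
          proof -
            have "None \<in> S - {p0}" using False None Some by (auto simp: S_def supp_def)
            then have "card (S - {p0} - {None}) = card (S - {p0}) - 1" by (simp add: card_Diff_singleton)
            moreover have "S - {p0, None} = S - {p0} - {None}" by auto
            ultimately show ?thesis using cSp by simp
          qed
          ultimately have "card F \<le> 2" using card_mono[of "S - {p0, None}" "Some ` F"] cardF by simp
          then have "coeff Q 3 = 0" using degQ by (simp add: coeff_eq_0)
          then show ?thesis by (simp add: pv_def None)
        next
          case (Some t)
          then have "t \<in> F" using False \<open>p \<noteq> p0\<close> by (auto simp: F_def S_def supp_def)
          then show ?thesis by (simp add: pv_def Some polyQ0)
        qed
      qed simp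
    qed
    then have "c p0 * pv Q p0 = 0" using code_orth[OF cc] degQ cF3 by simp
    moreover have "pv Q p0 \<noteq> 0" using t0F by (simp add: pv_def Some polyQ)
    ultimately show False using nz by simp
  qed
qed

lemma syn_add: "syn (\<lambda>p. x p + y p) k = syn x k + syn y k"
  by (simp add: syn_def algebra_simps sum.distrib)
lemma syn_diff: "syn (\<lambda>p. x p - y p) k = syn x k - syn y k"
  by (simp add: syn_def algebra_simps sum_subtractf)

lemma cubic_code_syn: "c \<in> cubic_code \<longleftrightarrow> (\<forall>k<4. syn c k = 0)"
  by (simp add: cubic_code_def syn_def)

lemma mem_coset: "x \<in> coset u \<longleftrightarrow> (\<forall>k<4. syn x k = syn u k)"
proof
  assume "x \<in> coset u"
  then obtain c where "c \<in> cubic_code" "x = (\<lambda>p. u p + c p)" by (auto simp: coset_def)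
  then show "\<forall>k<4. syn x k = syn u k" by (simp add: syn_add cubic_code_syn)
next
  assume h: "\<forall>k<4. syn x k = syn u k"
  define c where "c = (\<lambda>p. x p - u p)"
  have "c \<in> cubic_code" using h by (simp add: c_def syn_diff cubic_code_syn)
  moreover have "x = (\<lambda>p. u p + c p)" by (simp add: c_def)
  ultimately show "x \<in> coset u" by (auto simp: coset_def)
qed

lemma less4: "(k::nat) < 4 \<longleftrightarrow> k = 0 \<or> k = 1 \<or> k = 2 \<or> k = 3" by auto

lemma span:
  fixes T :: "'a::{field,finite} option set"
  assumes "4 \<le> card T"
  shows "\<exists>y. supp y \<subseteq> T \<and> (\<forall>k<4. syn y k = s k)"
proof -
  obtain A where A: "A \<subseteq> T" "card A = 4" "finite A"
    using obtain_subset_with_card_n[OF assms] by blast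
  obtain p1 A' where "A = insert p1 A'" "p1 \<notin> A'" "card A' = 3"
    using A(2) card_Suc_eq[of A 3] by (auto simp: numeral_eq_Suc)
  then obtain p1 p2 p3 p4 where pA: "A = {p1, p2, p3, p4}" and dist: "p1 \<noteq> p2" "p1 \<noteq> p3" "p1 \<noteq> p4" "p2 \<noteq> p3" "p2 \<noteq> p4" "p3 \<noteq> p4"
    by (auto simp: card_3_iff)
  define h :: "'a \<times> 'a \<times> 'a \<times> 'a \<Rightarrow> 'a option \<Rightarrow> 'a" where
    "h = (\<lambda>(c1, c2, c3, c4) p. if p = p1 then c1 else if p = p2 then c2 else if p = p3 then c3 else if p = p4 then c4 else 0)"
  have supph: "supp (h c) \<subseteq> A" for c
    by (cases c) (auto simp: supp_def h_def pA split: if_splits)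
  define f where "f = (\<lambda>c. (syn (h c) 0, syn (h c) 1, syn (h c) 2, syn (h c) 3))"
  have "inj f"
  proof (rule injI)
    fix a b assume fab: "f a = f b"
    define d where "d = (\<lambda>p. h a p - h b p)"
    have "\<forall>k<4. syn d k = 0" using fab by (auto simp: less4 d_def syn_diff f_def)
    then have dc: "d \<in> cubic_code" by (simp add: cubic_code_syn)
    have "supp d \<subseteq> A"
    proof
      fix x assume "x \<in> supp d"
      then have "h a x \<noteq> 0 \<or> h b x \<noteq> 0" by (auto simp: supp_def d_def)
      then show "x \<in> A" using supph[of a] supph[of b] by (auto simp: supp_def)
    qed
    then have "card (supp d) \<le> 4" using A by (metis card_mono)
    then have "\<And>p. d p = 0" using indep[OF dc] by blast
    then have "\<And>p. h a p = h b p" by (simp add: d_def)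
    then have "h a p1 = h b p1" "h a p2 = h b p2" "h a p3 = h b p3" "h a p4 = h b p4" by auto
    then show "a = b" using dist
      by (cases a; cases b) (auto simp: h_def)
  qed
  then have "surj f" by (simp add: finite_UNIV_inj_surj)
  then obtain c where "f c = (s 0, s 1, s 2, s 3)" by (metis surjD)
  then have "\<forall>k<4. syn (h c) k = s k" by (auto simp: f_def less4)
  then show ?thesis using supph[of c] A(1) by blast
qed

lemma card_supersets:
  fixes S :: "'b::finite set"
  assumes "card S \<le> t"
  shows "card {T. S \<subseteq> T \<and> card T = t} = (card (UNIV::'b set) - card S) choose (t - card S)"
proof -
  have fin: "finite (UNIV - S)" by simp
  have inj: "inj_on (\<lambda>R. R \<union> S) {R. R \<subseteq> UNIV - S \<and> card R = t - card S}"
    by (rule inj_onI) auto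
  have img: "(\<lambda>R. R \<union> S) ` {R. R \<subseteq> UNIV - S \<and> card R = t - card S} = {T. S \<subseteq> T \<and> card T = t}"
  proof (rule set_eqI, rule iffI)
    fix T assume "T \<in> (\<lambda>R. R \<union> S) ` {R. R \<subseteq> UNIV - S \<and> card R = t - card S}"
    then obtain R where R: "R \<subseteq> UNIV - S" "card R = t - card S" "T = R \<union> S" by auto
    have "R \<inter> S = {}" using R by blast
    then have "card T = card R + card S" using R by (simp add: card_Un_disjoint)
    then show "T \<in> {T. S \<subseteq> T \<and> card T = t}" using R assms by auto
  next
    fix T assume T: "T \<in> {T. S \<subseteq> T \<and> card T = t}"
    have "card (T - S) = t - card S" using T by (simp add: card_Diff_subset)
    moreover have "T = (T - S) \<union> S" using T by auto
    ultimately show "T \<in> (\<lambda>R. R \<union> S) ` {R. R \<subseteq> UNIV - S \<and> card R = t - card S}" by blast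
  qed
  have "card {T. S \<subseteq> T \<and> card T = t} = card {R. R \<subseteq> UNIV - S \<and> card R = t - card S}"
    using card_image[OF inj] img by simp
  also have "\<dots> = card (UNIV - S) choose (t - card S)" using n_subsets[OF fin] by simp
  also have "card (UNIV - S) = card (UNIV::'b set) - card S" by (simp add: card_Diff_subset)
  finally show ?thesis .
qed



lemma count_identity:
  fixes V :: "('a::{zero,finite} option \<Rightarrow> 'a) set"
  shows "(\<Sum>T\<in>{T. card T = t}. card {x\<in>V. supp x \<subseteq> T})
       = (\<Sum>k\<le>card (UNIV::'a option set). B k V * gco (card (UNIV::'a option set)) k t)"
proof -
  let ?n = "card (UNIV::'a option set)"
  have "(\<Sum>T\<in>{T. card T = t}. card {x\<in>V. supp x \<subseteq> T})
      = (\<Sum>T\<in>{T::'a option set. card T = t}. \<Sum>x\<in>V. if supp x \<subseteq> T then 1 else 0)"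
    by (rule sum.cong) (auto simp: sum.If_cases Int_def conj_commute)
  also have "\<dots> = (\<Sum>x\<in>V. \<Sum>T\<in>{T::'a option set. card T = t}. if supp x \<subseteq> T then 1 else 0)"
    by (rule sum.swap)
  also have "\<dots> = (\<Sum>x\<in>V. gco ?n (hweight x) t)"
  proof (rule sum.cong)
    fix x assume "x \<in> V"
    have "(\<Sum>T\<in>{T::'a option set. card T = t}. if supp x \<subseteq> T then 1 else 0)
        = card {T. supp x \<subseteq> T \<and> card T = t}"
      by (simp add: sum.If_cases Int_def conj_commute)
    also have "\<dots> = gco ?n (hweight x) t"
    proof (cases "hweight x \<le> t")
      case True
      then show ?thesis unfolding gco_def using card_supersets[of "supp x" t]
        by (simp add: hweight_def supp_def)
    next
      case False
      have "{T. supp x \<subseteq> T \<and> card T = t} = {}"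
      proof safe
        fix T assume "supp x \<subseteq> T" "t = card T"
        then have "card (supp x) \<le> t" by (simp add: card_mono)
        then show "T \<in> {}" using False by (simp add: hweight_def supp_def)
      qed
      then show ?thesis using False by (simp add: gco_def)
    qed
    finally show "(\<Sum>T\<in>{T::'a option set. card T = t}. if supp x \<subseteq> T then 1 else 0) = gco ?n (hweight x) t" .
  qed simp
  also have "\<dots> = (\<Sum>k\<le>?n. \<Sum>x\<in>{x\<in>V. hweight x = k}. gco ?n (hweight x) t)"
    by (rule sum.group[symmetric]) (auto simp: hweight_def card_mono)
  also have "\<dots> = (\<Sum>k\<le>?n. B k V * gco ?n k t)"
    by (rule sum.cong) (auto simp: B_def)
  finally show ?thesis .
qed


lemma N_eq:
  fixes u v :: "'a::{field,finite} option \<Rightarrow> 'a"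
  assumes T: "4 \<le> card T"
  shows "card {x\<in>coset u. supp x \<subseteq> T} = card {x\<in>coset v. supp x \<subseteq> T}"
proof -
  obtain y where y: "supp y \<subseteq> T" "\<forall>k<4. syn y k = syn v k - syn u k"
    using span[where s="\<lambda>k. syn v k - syn u k", OF T] by blast
  define g where "g = (\<lambda>x p. x p + y p)"
  have inj: "inj_on g {x\<in>coset u. supp x \<subseteq> T}"
  proof (rule inj_onI)
    fix x x' assume a: "g x = g x'"
    show "x = x'"
    proof
      fix p
      have "g x p = g x' p" using a by simp
      then show "x p = x' p" by (simp add: g_def)
    qed
  qed
  have "g ` {x\<in>coset u. supp x \<subseteq> T} = {x\<in>coset v. supp x \<subseteq> T}"
  proof (rule set_eqI, rule iffI)
    fix z assume "z \<in> g ` {x\<in>coset u. supp x \<subseteq> T}"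
    then obtain x where x: "x \<in> coset u" "supp x \<subseteq> T" "z = g x" by auto
    have "\<forall>k<4. syn z k = syn v k" using x y(2) by (simp add: g_def syn_add mem_coset)
    moreover have "supp z \<subseteq> T"
    proof
      fix p assume "p \<in> supp z"
      then have "x p \<noteq> 0 \<or> y p \<noteq> 0" using x(3) by (auto simp: supp_def g_def)
      then show "p \<in> T" using x(2) y(1) by (auto simp: supp_def)
    qed
    ultimately show "z \<in> {x\<in>coset v. supp x \<subseteq> T}" by (simp add: mem_coset)
  next
    fix z assume z: "z \<in> {x\<in>coset v. supp x \<subseteq> T}"
    define x where "x = (\<lambda>p. z p - y p)"
    have "\<forall>k<4. syn x k = syn u k" using z y(2) by (simp add: x_def syn_diff mem_coset)
    moreover have "supp x \<subseteq> T"
    proof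
      fix p assume "p \<in> supp x"
      then have "z p \<noteq> 0 \<or> y p \<noteq> 0" by (auto simp: supp_def x_def)
      then show "p \<in> T" using z y(1) by (auto simp: supp_def)
    qed
    moreover have "z = g x" by (simp add: g_def x_def)
    ultimately show "z \<in> g ` {x\<in>coset u. supp x \<subseteq> T}" by (intro image_eqI[of _ _ x]) (auto simp: mem_coset)
  qed
  then show ?thesis using card_image[OF inj] by simp
qed

lemma weight_facts:
  fixes u :: "'a::{field,finite} option \<Rightarrow> 'a"
  assumes cw: "coset_weight (coset u) = W" and W: "W = 2 \<or> W = 3"
  shows "B 0 (coset u) = 0" "B 1 (coset u) = 0" "B 2 (coset u) = (if W = 2 then 1 else 0)"
proof -
  let ?V = "coset u"
  have ne: "hweight ` ?V \<noteq> {}" using mem_coset[of u u] by auto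
  have fin: "finite (hweight ` ?V)" by simp
  have low: "W \<le> hweight x" if "x \<in> ?V" for x
    using cw Min_le[OF fin] that unfolding coset_weight_def by auto
  obtain x0 where x0: "x0 \<in> ?V" "hweight x0 = W"
    using Min_in[OF fin ne] cw unfolding coset_weight_def by auto
  have zero: "B k ?V = 0" if "k < W" for k
  proof -
    have "{x\<in>?V. hweight x = k} = {}" using low that by fastforce
    then show ?thesis by (simp add: B_def)
  qed
  show "B 0 ?V = 0" "B 1 ?V = 0" using zero W by auto
  show "B 2 ?V = (if W = 2 then 1 else 0)"
  proof (cases "W = 2")
    case True
    have "{x\<in>?V. hweight x = 2} = {x0}"
    proof (rule set_eqI, rule iffI)
      fix x assume x: "x \<in> {x\<in>?V. hweight x = 2}"
      define d where "d = (\<lambda>p. x p - x0 p)"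
      have "\<forall>k<4. syn d k = 0" using x x0 by (simp add: d_def syn_diff mem_coset)
      then have dc: "d \<in> cubic_code" by (simp add: cubic_code_syn)
      have "supp d \<subseteq> supp x \<union> supp x0" by (auto simp: supp_def d_def)
      then have "card (supp d) \<le> card (supp x \<union> supp x0)" by (simp add: card_mono)
      also have "\<dots> \<le> card (supp x) + card (supp x0)" by (rule card_Un_le)
      also have "\<dots> = 4" using x x0 True by (simp add: hweight_def supp_def)
      finally have "\<And>p. d p = 0" using indep[OF dc] by blast
      then have "x = x0" by (auto simp: d_def)
      then show "x \<in> {x0}" by simp
    next
      fix x assume "x \<in> {x0}"
      then show "x \<in> {x\<in>?V. hweight x = 2}" using x0 True by simp
    qed
    then show ?thesis using True by (simp add: B_def)
  next
    case False
    then show ?thesis using zero W by auto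
  qed
qed

lemma card_opt: "card (UNIV :: 'a::finite option set) = Suc (card (UNIV :: 'a set))"
proof -
  have e: "(UNIV :: 'a option set) = insert None (Some ` (UNIV :: 'a set))" by (rule UNIV_option_conv)
  have "None \<notin> Some ` (UNIV :: 'a set)" by auto
  then have "card (insert None (Some ` (UNIV :: 'a set))) = Suc (card (UNIV :: 'a set))"
    by (simp add: card_image)
  then show ?thesis by (simp only: e[symmetric])
qed

lemma main_lemma:
  fixes u v :: "'a::{field,finite} option \<Rightarrow> 'a" and w :: nat
  defines "q \<equiv> card (UNIV :: 'a set)"
  assumes q5: "q \<ge> 5" and w3: "3 \<le> w" and wq: "w \<le> (q + 3) div 2"
    and W: "W = 2 \<or> W = 3"
    and cu: "coset_weight (coset u) = W" and cv: "coset_weight (coset v) = W"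
  shows "int (B (q + 4 - w) (coset u)) - (-1) ^ q * int (B w (coset u)) =
         int (B (q + 4 - w) (coset v)) - (-1) ^ q * int (B w (coset v))"
proof -
  define n where "n = card (UNIV :: 'a option set)"
  have nq: "n = q + 1" by (simp add: n_def q_def card_opt)
  define D where "D k = int (B k (coset u)) - int (B k (coset v))" for k
  have D0: "D 0 = 0" "D 1 = 0" "D 2 = 0"
    using weight_facts[OF cu W] weight_facts[OF cv W] by (simp_all add: D_def)
  have eq: "(\<Sum>k\<le>n. D k * int (gco n k t)) = 0" if "4 \<le> t" "t \<le> n" for t
  proof -
    have "(\<Sum>T\<in>{T. card T = t}. card {x\<in>coset u. supp x \<subseteq> T})
        = (\<Sum>T\<in>{T. card T = t}. card {x\<in>coset v. supp x \<subseteq> T})"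
      by (rule sum.cong) (use N_eq that in auto)
    then have "(\<Sum>k\<le>n. B k (coset u) * gco n k t) = (\<Sum>k\<le>n. B k (coset v) * gco n k t)"
      unfolding n_def count_identity .
    then have "int (\<Sum>k\<le>n. B k (coset u) * gco n k t) = int (\<Sum>k\<le>n. B k (coset v) * gco n k t)"
      by simp
    then show ?thesis by (simp add: D_def algebra_simps sum_subtractf of_nat_sum)
  qed
  have n3: "3 \<le> n" using nq q5 by simp
  have wn: "w \<le> n" using wq nq by simp
  define k1 where "k1 = q + 4 - w"
  have k1: "3 \<le> k1" "k1 \<le> n" using wn w3 nq by (auto simp: k1_def)
  have Dk1: "D k1 = (-1)^(k1-3) * int ((n-3) choose (k1-3)) * D 3"
    by (rule triangular[OF D0 n3 eq k1]) auto
  have Dw: "D w = (-1)^(w-3) * int ((n-3) choose (w-3)) * D 3"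
    by (rule triangular[OF D0 n3 eq w3 wn]) auto
  define a where "a = w - 3"
  define m where "m = n - 3"
  have am: "a \<le> m" using wn w3 by (simp add: a_def m_def)
  have k13: "k1 - 3 = m - a" using w3 wn nq by (simp add: k1_def a_def m_def)
  have binom: "m choose (m - a) = m choose a" using am by (simp add: binomial_symmetric[symmetric])
  have qa: "q + a = (m - a) + 2 * (a + 1)" using am nq n3 by (simp add: m_def)
  have sign: "(-1::int)^(m - a) = (-1)^q * (-1)^a"
  proof -
    have "(-1::int)^q * (-1)^a = (-1)^(q + a)" by (simp add: power_add)
    also have "\<dots> = (-1)^(m - a)" unfolding qa by (simp add: power_add power_mult)
    finally show ?thesis by simp
  qed
  have "D k1 = (-1)^q * D w"
    using Dk1 Dw unfolding k13 binom sign a_def[symmetric] m_def[symmetric] by simp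
  then show ?thesis by (simp add: D_def k1_def algebra_simps)
qed

theorem theorem5p2:
  fixes w :: nat
  defines "q \<equiv> card (UNIV :: 'a::{field,finite} set)"
  assumes "q \<ge> 5"
    and "3 \<le> w" and "w \<le> (q + 3) div 2"
  shows "(\<forall>W::nat. ((W = 2 \<and> q mod 3 = 1) \<or> (W = 3 \<and> q mod 3 = 1) \<or> (W = 3 \<and> q mod 3 = 0)) \<longrightarrow>
            (\<forall>(u :: 'a option \<Rightarrow> 'a) (v :: 'a option \<Rightarrow> 'a).
               coset_weight (coset u) = W \<and> coset_weight (coset v) = W \<longrightarrow>
               int (B (q + 4 - w) (coset u)) - (-1) ^ q * int (B w (coset u)) =
               int (B (q + 4 - w) (coset v)) - (-1) ^ q * int (B w (coset v))))
       \<and> (q mod 3 = 2 \<longrightarrow>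
            (\<forall>(u :: 'a option \<Rightarrow> 'a) (v :: 'a option \<Rightarrow> 'a).
               coset_weight (coset u) = 3 \<and> coset_weight (coset v) = 3 \<longrightarrow>
               int (B (q + 4 - w) (coset u)) - (-1) ^ q * int (B w (coset u)) =
               int (B (q + 4 - w) (coset v)) - (-1) ^ q * int (B w (coset v))))"
proof (intro conjI allI impI)
  fix W :: nat and u v :: "'a option \<Rightarrow> 'a"
  assume h1: "(W = 2 \<and> q mod 3 = 1) \<or> (W = 3 \<and> q mod 3 = 1) \<or> (W = 3 \<and> q mod 3 = 0)"
    and h2: "coset_weight (coset u) = W \<and> coset_weight (coset v) = W"
  have W: "W = 2 \<or> W = 3" using h1 by auto
  show "int (B (q + 4 - w) (coset u)) - (-1) ^ q * int (B w (coset u)) =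
        int (B (q + 4 - w) (coset v)) - (-1) ^ q * int (B w (coset v))"
    using main_lemma[of w W u v] assms W h2 unfolding q_def by blast
next
  fix u v :: "'a option \<Rightarrow> 'a"
  assume h2: "coset_weight (coset u) = 3 \<and> coset_weight (coset v) = 3"
  show "int (B (q + 4 - w) (coset u)) - (-1) ^ q * int (B w (coset u)) =
        int (B (q + 4 - w) (coset v)) - (-1) ^ q * int (B w (coset v))"
    using main_lemma[of w 3 u v] assms h2 unfolding q_def by blast
qed

end
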